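(* Let $i\ne j$ be agents and $\chi_i(0),\chi_j(0)>0$ with $\chi_i(0)+\chi_j(0)\le1$ such that $$\lim_{N\to\infty}\frac{\sum_{k=\chi_i(0)N}^\infty 1/F_i(k)}{\sum_{k=\chi_j(0)N}^\infty 1/F_j(k)}=1. \qquad (\ast)$$ (1) If there is $C<\infty$ with $\frac1kF_i(k)\sum_{l=k}^\infty\frac1{F_i(l)}\le C$ for all $k\in\mathbb{N}$, then for every $\epsilon>0$ $$\limsup_{N\to\infty}\frac{\sum_{k=(\chi_i(0)+\epsilon)N}^\infty 1/F_i(k)}{\sum_{k=\chi_j(0)N}^\infty 1/F_j(k)}<1 .$$ (2) If $\lim_{k\to\infty}\frac1kF_i(k)\sum_{l=k}^\infty\frac1{F_i(l)}=\infty$ and $(\ast)$ holds for one choice of $\chi_i(0),\chi_j(0)$, then $(\ast)$ holds for all choices $\chi_i(0),\chi_j(0)>0$ with $\chi_i(0)+\chi_j(0)\le1$.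
   Context: Feedback functions $F_i,F_j:\mathbb{N}\to(0,\infty)$ with $\sum_k 1/F_i(k)<\infty$ and $\sum_k1/F_j(k)<\infty$. Sums whose lower limit $xN$ is non-integer start at the rounded value. *)

theory Defs
  imports "HOL-Analysis.Analysis"
begin

definition tail :: "(nat \<Rightarrow> real) \<Rightarrow> nat \<Rightarrow> real" where
  "tail F m = (\<Sum>k. 1 / F (k + m))"

definition lowidx :: "real \<Rightarrow> nat \<Rightarrow> nat" where
  "lowidx x N = nat (round (x * real N))"

definition tail_ratio ::
  "(nat \<Rightarrow> real) \<Rightarrow> (nat \<Rightarrow> real) \<Rightarrow> real \<Rightarrow> real \<Rightarrow> nat \<Rightarrow> real" where
  "tail_ratio Fi Fj a b N = tail Fi (lowidx a N) / tail Fj (lowidx b N)"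

end

theory Submission
  imports Defs
begin

lemma tail_Suc:
  assumes "summable (\<lambda>k. 1 / F k)"
  shows "tail F m = 1 / F m + tail F (Suc m)"
proof -
  have s: "summable (\<lambda>k. 1 / F (k + m))" using summable_ignore_initial_segment[OF assms] by simp
  have "(\<Sum>k. 1 / F (Suc k + m)) = (\<Sum>k. 1 / F (k + m)) - 1 / F (0 + m)"
    using suminf_split_head[OF s] by simp
  then show ?thesis unfolding tail_def by simp
qed

lemma tail_pos:
  assumes "summable (\<lambda>k. 1 / F k)" "\<And>k. F k > 0"
  shows "tail F m > 0"
proof -
  have s: "summable (\<lambda>k. 1 / F (k + m))" using summable_ignore_initial_segment[OF assms(1)] by simp
  show ?thesis unfolding tail_def
    by (rule suminf_pos[OF s]) (use assms(2) in simp)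
qed

lemma tail_tele:
  assumes "summable (\<lambda>k. 1 / F k)" "n \<le> m"
  shows "tail F n - tail F m = (\<Sum>l\<in>{n..<m}. 1 / F l)"
  using assms(2)
proof (induction m rule: dec_induct)
  case base then show ?case by simp
next
  case (step m)
  then show ?case using tail_Suc[OF assms(1), of m] by simp
qed

lemma tail_mono:
  assumes "summable (\<lambda>k. 1 / F k)" "\<And>k. F k > 0" "n \<le> m"
  shows "tail F m \<le> tail F n"
proof -
  have "0 \<le> (\<Sum>l\<in>{n..<m}. 1 / F l)" using assms(2) by (intro sum_nonneg) (simp add: less_imp_le)
  then show ?thesis using tail_tele[OF assms(1,3)] by simp
qed


lemma KI_upper:
  assumes sm: "summable (\<lambda>k. 1 / F k)" and pos: "\<And>k. F k > 0" and K: "K > 0"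
    and h: "\<And>l. l \<ge> k0 \<Longrightarrow> K * real l \<le> F l * tail F l"
    and n: "k0 \<le> n" "1 \<le> n" "n \<le> m"
  shows "tail F n - tail F m \<le> (real m - real n) * tail F n / (K * real n)"
proof -
  have "\<forall>l\<in>{n..<m}. 1 / F l \<le> tail F n / (K * real n)"
  proof
    fix l assume l: "l \<in> {n..<m}"
    have Fl: "F l > 0" using pos by simp
    have Tl: "tail F l > 0" using tail_pos[OF sm pos] by simp
    have hl: "K * real l \<le> F l * tail F l" using h l n by simp
    have "1 / F l \<le> tail F l / (K * real l)"
      using hl Fl K l n by (simp add: field_simps)
    also have "\<dots> \<le> tail F n / (K * real n)"
    proof (rule frac_le)
      show "0 \<le> tail F n" using tail_pos[OF sm pos, of n] by simp
      show "tail F l \<le> tail F n" using tail_mono[OF sm pos] l by simp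
      show "0 < K * real n" using K n by simp
      show "K * real n \<le> K * real l" using K l by simp
    qed
    finally show "1 / F l \<le> tail F n / (K * real n)" .
  qed
  then have "(\<Sum>l\<in>{n..<m}. 1 / F l) \<le> (\<Sum>l\<in>{n..<m}. tail F n / (K * real n))"
    by (intro sum_mono) auto
  also have "\<dots> = (real m - real n) * tail F n / (K * real n)" using n by (simp add: of_nat_diff)
  finally show ?thesis using tail_tele[OF sm n(3)] by simp
qed

lemma KI_lower:
  assumes sm: "summable (\<lambda>k. 1 / F k)" and pos: "\<And>k. F k > 0" and C: "C > 0"
    and h: "\<And>l. l \<ge> 1 \<Longrightarrow> F l * tail F l \<le> C * real l"
    and n: "1 \<le> n" "n \<le> m"
  shows "(real m - real n) * tail F m / (C * real m) \<le> tail F n - tail F m"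
proof -
  have "\<forall>l\<in>{n..<m}. tail F m / (C * real m) \<le> 1 / F l"
  proof
    fix l assume l: "l \<in> {n..<m}"
    have Fl: "F l > 0" using pos by simp
    have hl: "F l * tail F l \<le> C * real l" using h l n by simp
    have "tail F m / (C * real m) \<le> tail F l / (C * real l)"
    proof (rule frac_le)
      show "0 \<le> tail F l" using tail_pos[OF sm pos, of l] by simp
      show "tail F m \<le> tail F l" using tail_mono[OF sm pos] l by simp
      show "0 < C * real l" using C l n by simp
      show "C * real l \<le> C * real m" using C l by simp
    qed
    also have "\<dots> \<le> 1 / F l"
      using hl Fl C l n by (simp add: field_simps)
    finally show "tail F m / (C * real m) \<le> 1 / F l" .
  qed
  then have "(\<Sum>l\<in>{n..<m}. tail F m / (C * real m)) \<le> (\<Sum>l\<in>{n..<m}. 1 / F l)"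
    by (intro sum_mono) auto
  moreover have "(\<Sum>l\<in>{n..<m}. tail F m / (C * real m)) = (real m - real n) * tail F m / (C * real m)" using n by (simp add: of_nat_diff[OF n(2)])
  ultimately show ?thesis using tail_tele[OF sm n(2)] by linarith
qed

lemma SV0:
  assumes sm: "summable (\<lambda>k. 1 / F k)" and pos: "\<And>k. F k > 0"
    and hyp: "filterlim (\<lambda>k. (1 / real k) * F k * tail F k) at_top sequentially"
    and c: "c \<ge> 1"
    and ev: "eventually (\<lambda>N. n N \<le> m N \<and> real (m N) \<le> c * real (n N)) sequentially"
    and nt: "\<And>k0. eventually (\<lambda>N. k0 \<le> n N) sequentially"
  shows "((\<lambda>N. tail F (m N) / tail F (n N)) \<longlongrightarrow> 1) sequentially"
  unfolding tendsto_iff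
proof (intro allI impI)
  fix e :: real assume e: "e > 0"
  define K where "K = c / e + 1"
  have K: "K > 0" using c e by (simp add: K_def add_pos_nonneg)
  have "eventually (\<lambda>k. K \<le> (1 / real k) * F k * tail F k) sequentially"
    using hyp by (simp add: filterlim_at_top)
  then obtain k0 where k0: "\<And>k. k \<ge> k0 \<Longrightarrow> K \<le> (1 / real k) * F k * tail F k"
    by (auto simp: eventually_sequentially)
  have h: "K * real l \<le> F l * tail F l" if l: "l \<ge> max k0 1" for l
  proof -
    have "K \<le> (1 / real l) * F l * tail F l" using k0 l by simp
    moreover have "real l > 0" using l by simp
    ultimately show ?thesis by (simp add: field_simps)
  qed
  show "eventually (\<lambda>N. dist (tail F (m N) / tail F (n N)) 1 < e) sequentially"
    using eventually_conj[OF ev nt[of "max k0 1"]]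
  proof (rule eventually_mono)
    fix N assume "(n N \<le> m N \<and> real (m N) \<le> c * real (n N)) \<and> max k0 1 \<le> n N"
    then have nm: "n N \<le> m N" "real (m N) \<le> c * real (n N)" "max k0 1 \<le> n N" by auto
    define a where "a = n N"
    define b where "b = m N"
    have ab: "a \<le> b" "real b \<le> c * real a" "max k0 1 \<le> a" "1 \<le> a" using nm by (auto simp: a_def b_def)
    have Ta: "tail F a > 0" and Tb: "tail F b > 0" using tail_pos[OF sm pos] by auto
    have key: "tail F a - tail F b \<le> (real b - real a) * tail F a / (K * real a)"
      by (rule KI_upper[OF sm pos K h ab(3) ab(4) ab(1)])
    have le1: "tail F b / tail F a \<le> 1" using tail_mono[OF sm pos ab(1)] Ta by simp
    have "1 - tail F b / tail F a = (tail F a - tail F b) / tail F a" using Ta by (simp add: field_simps)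
    also have "\<dots> \<le> ((real b - real a) * tail F a / (K * real a)) / tail F a"
      by (rule divide_right_mono[OF key]) (use Ta in linarith)
    also have "\<dots> = (real b - real a) / (K * real a)" using Ta by simp
    also have "\<dots> \<le> ((c - 1) * real a) / (K * real a)"
      using ab K by (intro divide_right_mono) (auto simp: algebra_simps)
    also have "\<dots> = (c - 1) / K" using ab by simp
    also have "\<dots> < e" using K e c by (simp add: K_def field_simps add_pos_pos)
    finally have "1 - tail F b / tail F a < e" .
    then show "dist (tail F (m N) / tail F (n N)) 1 < e"
      using le1 by (simp add: dist_real_def a_def b_def abs_if)
  qed
qed

lemma SV:
  assumes sm: "summable (\<lambda>k. 1 / F k)" and pos: "\<And>k. F k > 0"
    and hyp: "filterlim (\<lambda>k. (1 / real k) * F k * tail F k) at_top sequentially"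
    and c: "c \<ge> 1"
    and ev: "eventually (\<lambda>N. real (p N) \<le> c * real (q N) \<and> real (q N) \<le> c * real (p N)) sequentially"
    and qt: "filterlim q at_top sequentially"
  shows "((\<lambda>N. tail F (p N) / tail F (q N)) \<longlongrightarrow> 1) sequentially"
proof -
  define mn where "mn N = min (p N) (q N)" for N
  define mx where "mx N = max (p N) (q N)" for N
  have ev2: "eventually (\<lambda>N. mn N \<le> mx N \<and> real (mx N) \<le> c * real (mn N)) sequentially"
    using ev
  proof eventually_elim
    case (elim N)
    then show ?case by (cases "p N \<le> q N") (simp_all add: mn_def mx_def)
  qed
  have nt: "eventually (\<lambda>N. k0 \<le> mn N) sequentially" for k0
  proof -
    have "eventually (\<lambda>N. nat \<lceil>c * real k0\<rceil> \<le> q N) sequentially"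
      using filterlim_at_top[THEN iffD1, OF qt] by blast
    then have "eventually (\<lambda>N. c * real k0 \<le> real (q N)) sequentially"
      by eventually_elim simp
    then show ?thesis using ev
    proof eventually_elim
      case (elim N)
      have "c * real k0 \<le> real (q N)" using elim(1) .
      then have "c * real k0 \<le> c * real (p N)" using elim(2) by linarith
      then have "real k0 \<le> real (p N)" using c by simp
      moreover have "real k0 \<le> c * real k0" using c mult_right_mono[of 1 c "real k0"] by simp
      moreover have "real k0 \<le> real (q N)" using \<open>c * real k0 \<le> real (q N)\<close> calculation(2) by linarith
      ultimately show ?case by (simp add: mn_def)
    qed
  qed
  have A: "((\<lambda>N. tail F (mx N) / tail F (mn N)) \<longlongrightarrow> 1) sequentially"
    by (rule SV0[OF sm pos hyp c ev2 nt])
  have B: "((\<lambda>N. tail F (mn N) / tail F (mx N)) \<longlongrightarrow> 1) sequentially"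
  proof -
    have "((\<lambda>N. 1 / (tail F (mx N) / tail F (mn N))) \<longlongrightarrow> 1 / 1) sequentially"
      by (rule tendsto_divide[OF tendsto_const A]) simp
    then show ?thesis by simp
  qed
  have Tp: "\<And>k. tail F k > 0" using tail_pos[OF sm pos] by auto
  show ?thesis
  proof (rule tendsto_sandwich[OF _ _ A B])
    show "eventually (\<lambda>N. tail F (mx N) / tail F (mn N) \<le> tail F (p N) / tail F (q N)) sequentially"
    proof (rule always_eventually, rule allI)
      fix N
      have "tail F (mx N) \<le> tail F (mn N)" by (rule tail_mono[OF sm pos]) (simp add: mn_def mx_def)
      then have le: "tail F (mx N) / tail F (mn N) \<le> 1" using Tp[of "mn N"] by simp
      have ge: "1 \<le> tail F (mn N) / tail F (mx N)" using \<open>tail F (mx N) \<le> tail F (mn N)\<close> Tp[of "mx N"] by simp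
      show "tail F (mx N) / tail F (mn N) \<le> tail F (p N) / tail F (q N)"
      proof (cases "p N \<le> q N")
        case True
        then have eqs: "mn N = p N" "mx N = q N" by (auto simp: mn_def mx_def)
        show ?thesis using le ge unfolding eqs by linarith
      next
        case False
        then have eqs: "mn N = q N" "mx N = p N" by (auto simp: mn_def mx_def)
        show ?thesis using le ge unfolding eqs by linarith
      qed
    qed
    show "eventually (\<lambda>N. tail F (p N) / tail F (q N) \<le> tail F (mn N) / tail F (mx N)) sequentially"
    proof (rule always_eventually, rule allI)
      fix N
      have "tail F (mx N) \<le> tail F (mn N)" by (rule tail_mono[OF sm pos]) (simp add: mn_def mx_def)
      then have le: "tail F (mx N) / tail F (mn N) \<le> 1" using Tp[of "mn N"] by simp
      have ge: "1 \<le> tail F (mn N) / tail F (mx N)" using \<open>tail F (mx N) \<le> tail F (mn N)\<close> Tp[of "mx N"] by simp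
      show "tail F (p N) / tail F (q N) \<le> tail F (mn N) / tail F (mx N)"
      proof (cases "p N \<le> q N")
        case True
        then have eqs: "mn N = p N" "mx N = q N" by (auto simp: mn_def mx_def)
        show ?thesis using le ge unfolding eqs by linarith
      next
        case False
        then have eqs: "mn N = q N" "mx N = p N" by (auto simp: mn_def mx_def)
        show ?thesis using le ge unfolding eqs by linarith
      qed
    qed
  qed
qed

lemma lin_at_top:
  assumes r: "r > 0" and b: "\<And>N. \<bar>real (p N) - r * real N\<bar> \<le> d"
  shows "filterlim p at_top sequentially"
  unfolding filterlim_at_top
proof
  fix Z :: nat
  obtain N0 :: nat where N0: "(real Z + d) / r \<le> real N0" using real_arch_simple by blast
  show "eventually (\<lambda>N. Z \<le> p N) sequentially"
    using eventually_ge_at_top[of N0]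
  proof eventually_elim
    case (elim N)
    have "real Z + d \<le> r * real N0" using N0 r by (simp add: field_simps)
    also have "\<dots> \<le> r * real N" using elim r by simp
    finally have "real Z \<le> real (p N)" using b[of N] by linarith
    then show ?case by simp
  qed
qed

lemma SVlin:
  assumes sm: "summable (\<lambda>k. 1 / F k)" and pos: "\<And>k. F k > 0"
    and hyp: "filterlim (\<lambda>k. (1 / real k) * F k * tail F k) at_top sequentially"
    and r: "r > 0" and b: "\<And>N. \<bar>real (p N) - r * real N\<bar> \<le> d"
  shows "((\<lambda>N. tail F (p N) / tail F N) \<longlongrightarrow> 1) sequentially"
proof (rule SV[OF sm pos hyp _ _ filterlim_ident])
  define c where "c = 2 / r + r + d + 1"
  have d0: "d \<ge> 0" using b[of 0] by simp
  show "1 \<le> c" using r d0 by (simp add: c_def)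
  obtain N0 :: nat where N0: "max 1 (2 * d / r) \<le> real N0" using real_arch_simple by blast
  show "eventually (\<lambda>N. real (p N) \<le> c * real N \<and> real N \<le> c * real (p N)) sequentially"
    using eventually_ge_at_top[of N0]
  proof eventually_elim
    case (elim N)
    have N1: "1 \<le> real N" and N2: "2 * d / r \<le> real N" using N0 elim by auto
    have pb: "real (p N) \<le> r * real N + d" "r * real N - d \<le> real (p N)" using b[of N] by auto
    have "d \<le> d * real N" using N1 d0 mult_left_mono[of 1 "real N" d] by simp
    moreover have "r * real N + d * real N \<le> c * real N"
      using r d0 N1 by (simp add: c_def algebra_simps)
    ultimately have A: "real (p N) \<le> c * real N" using pb by (simp add: algebra_simps)
    have "2 * d \<le> r * real N" using N2 r by (simp add: field_simps)
    then have "r * real N / 2 \<le> real (p N)" using pb by linarith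
    then have "(2 / r) * (r * real N / 2) \<le> (2 / r) * real (p N)" using r by (intro mult_left_mono) auto
    then have "real N \<le> (2 / r) * real (p N)" using r by simp
    also have "\<dots> \<le> c * real (p N)" using r d0 by (intro mult_right_mono) (auto simp: c_def)
    finally show ?case using A by simp
  qed
qed

lemma lowidx_bound:
  assumes "x \<ge> 0"
  shows "\<bar>real (lowidx x N) - x * real N\<bar> \<le> 1/2"
proof -
  have "0 \<le> round (x * real N)" using round_mono[of 0 "x * real N"] assms by simp
  then have "real (lowidx x N) = of_int (round (x * real N))" by (simp add: lowidx_def)
  then show ?thesis using of_int_round_abs_le[of "x * real N"] by simp
qed

lemma floor_bound:
  assumes "y \<ge> 0" shows "real (nat \<lfloor>y\<rfloor>) \<le> y" "y - 1 \<le> real (nat \<lfloor>y\<rfloor>)"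
proof -
  have "0 \<le> \<lfloor>y\<rfloor>" using assms by simp
  then have e: "real (nat \<lfloor>y\<rfloor>) = of_int \<lfloor>y\<rfloor>" by simp
  show "real (nat \<lfloor>y\<rfloor>) \<le> y" "y - 1 \<le> real (nat \<lfloor>y\<rfloor>)" unfolding e by auto
qed

lemma ceiling_bound:
  assumes "y \<ge> 0" shows "y \<le> real (nat \<lceil>y\<rceil>)" "real (nat \<lceil>y\<rceil>) \<le> y + 1"
proof -
  have "0 \<le> \<lceil>y\<rceil>" using assms by (meson ceiling_mono ceiling_zero order_trans le_of_int_ceiling of_int_0_le_iff order.refl)
  then have e: "real (nat \<lceil>y\<rceil>) = of_int \<lceil>y\<rceil>" by simp
  show "y \<le> real (nat \<lceil>y\<rceil>)" "real (nat \<lceil>y\<rceil>) \<le> y + 1" unfolding e by auto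
qed

lemma lowidx_mono: "0 \<le> x \<Longrightarrow> x * real M \<le> y * real N \<Longrightarrow> lowidx x M \<le> lowidx y N"
  unfolding lowidx_def by (intro nat_mono round_mono)

lemma part2:
  assumes smi: "summable (\<lambda>k. 1 / Fi k)" and posi: "\<And>k. Fi k > 0"
    and smj: "summable (\<lambda>k. 1 / Fj k)" and posj: "\<And>k. Fj k > 0"
    and hyp: "filterlim (\<lambda>k. (1 / real k) * Fi k * tail Fi k) at_top sequentially"
    and a0: "a0 > 0" and b0: "b0 > 0"
    and lim0: "tail_ratio Fi Fj a0 b0 \<longlonglongrightarrow> 1"
    and a: "a > 0" and b: "b > 0"
  shows "tail_ratio Fi Fj a b \<longlonglongrightarrow> 1"
proof -
  define T where "T = tail Fi"
  define U where "U = tail Fj"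
  have Tp: "\<And>k. T k > 0" unfolding T_def using tail_pos[OF smi posi] by auto
  have Up: "\<And>k. U k > 0" unfolding U_def using tail_pos[OF smj posj] by auto
  have G: "((\<lambda>N. T (lowidx x N) / T N) \<longlongrightarrow> 1) sequentially" if x: "x > 0" for x
    unfolding T_def by (rule SVlin[OF smi posi hyp x lowidx_bound]) (use x in simp)
  have H: "((\<lambda>M. U (lowidx b0 M) / T M) \<longlongrightarrow> 1) sequentially"
  proof -
    have "((\<lambda>M. (T (lowidx a0 M) / T M) / tail_ratio Fi Fj a0 b0 M) \<longlongrightarrow> 1 / 1) sequentially"
      by (rule tendsto_divide[OF G[OF a0] lim0]) simp
    moreover have "(T (lowidx a0 M) / T M) / tail_ratio Fi Fj a0 b0 M = U (lowidx b0 M) / T M" for M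
      using Tp[of M] Tp[of "lowidx a0 M"] Up[of "lowidx b0 M"]
      by (simp add: tail_ratio_def T_def U_def field_simps)
    ultimately show ?thesis by simp
  qed
  define r where "r = b / b0"
  have r: "r > 0" using b b0 by (simp add: r_def)
  have rb0: "b0 * r = b" using b0 by (simp add: r_def)
  define M1 where "M1 N = nat \<lfloor>r * real N\<rfloor>" for N
  define M2 where "M2 N = nat \<lceil>r * real N\<rceil>" for N
  have M1b: "\<bar>real (M1 N) - r * real N\<bar> \<le> 1" for N
  proof -
    have "r * real N \<ge> 0" using r by simp
    from floor_bound[OF this] show ?thesis unfolding M1_def abs_le_iff by linarith
  qed
  have M2b: "\<bar>real (M2 N) - r * real N\<bar> \<le> 1" for N
  proof -
    have "r * real N \<ge> 0" using r by simp
    from ceiling_bound[OF this] show ?thesis unfolding M2_def abs_le_iff by linarith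
  qed
  have lim_i: "((\<lambda>N. U (lowidx b0 (Mi N)) / T N) \<longlongrightarrow> 1) sequentially"
    if Mib: "\<And>N. \<bar>real (Mi N) - r * real N\<bar> \<le> 1" for Mi
  proof -
    have at: "filterlim Mi at_top sequentially" by (rule lin_at_top[OF r Mib])
    have h1: "((\<lambda>N. U (lowidx b0 (Mi N)) / T (Mi N)) \<longlongrightarrow> 1) sequentially"
      by (rule filterlim_compose[OF H at])
    have h2: "((\<lambda>N. T (Mi N) / T N) \<longlongrightarrow> 1) sequentially"
      unfolding T_def by (rule SVlin[OF smi posi hyp r Mib])
    have L: "((\<lambda>N. (U (lowidx b0 (Mi N)) / T (Mi N)) * (T (Mi N) / T N)) \<longlongrightarrow> 1 * 1) sequentially"
      by (rule tendsto_mult[OF h1 h2])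
    have E: "(U (lowidx b0 (Mi N)) / T (Mi N)) * (T (Mi N) / T N) = U (lowidx b0 (Mi N)) / T N" for N
      using Tp[of "Mi N"] by simp
    from L show ?thesis unfolding E by simp
  qed
  have Ub: "((\<lambda>N. U (lowidx b N) / T N) \<longlongrightarrow> 1) sequentially"
  proof (rule tendsto_sandwich[OF _ _ lim_i[OF M2b] lim_i[OF M1b]])
    show "eventually (\<lambda>N. U (lowidx b0 (M2 N)) / T N \<le> U (lowidx b N) / T N) sequentially"
    proof (rule always_eventually, rule allI)
      fix N
      have "b * real N \<le> b0 * real (M2 N)"
        using ceiling_bound(1)[of "r * real N"] r b0 unfolding M2_def
        by (metis rb0 mult.assoc mult_left_mono less_imp_le of_nat_0_le_iff mult_nonneg_nonneg)
      then have "lowidx b N \<le> lowidx b0 (M2 N)" using b by (intro lowidx_mono) auto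
      then have "U (lowidx b0 (M2 N)) \<le> U (lowidx b N)" unfolding U_def by (rule tail_mono[OF smj posj])
      then show "U (lowidx b0 (M2 N)) / T N \<le> U (lowidx b N) / T N"
        using Tp[of N] by (simp add: divide_right_mono)
    qed
    show "eventually (\<lambda>N. U (lowidx b N) / T N \<le> U (lowidx b0 (M1 N)) / T N) sequentially"
    proof (rule always_eventually, rule allI)
      fix N
      have "b0 * real (M1 N) \<le> b * real N"
        using floor_bound(1)[of "r * real N"] r b0 unfolding M1_def
        by (metis rb0 mult.assoc mult_left_mono less_imp_le of_nat_0_le_iff mult_nonneg_nonneg)
      then have "lowidx b0 (M1 N) \<le> lowidx b N" using b0 by (intro lowidx_mono) auto
      then have "U (lowidx b N) \<le> U (lowidx b0 (M1 N))" unfolding U_def by (rule tail_mono[OF smj posj])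
      then show "U (lowidx b N) / T N \<le> U (lowidx b0 (M1 N)) / T N"
        using Tp[of N] by (simp add: divide_right_mono)
    qed
  qed
  have "((\<lambda>N. (T (lowidx a N) / T N) / (U (lowidx b N) / T N)) \<longlongrightarrow> 1 / 1) sequentially"
    by (rule tendsto_divide[OF G[OF a] Ub]) simp
  moreover have "(T (lowidx a N) / T N) / (U (lowidx b N) / T N) = tail_ratio Fi Fj a b N" for N
    using Tp[of N] by (simp add: tail_ratio_def T_def U_def)
  ultimately show ?thesis by simp
qed

lemma part1:
  assumes smi: "summable (\<lambda>k. 1 / Fi k)" and posi: "\<And>k. Fi k > 0"
    and smj: "summable (\<lambda>k. 1 / Fj k)" and posj: "\<And>k. Fj k > 0"
    and a: "a > 0"
    and lim: "tail_ratio Fi Fj a b \<longlonglongrightarrow> 1"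
    and Cb: "\<forall>k::nat. (1 / real k) * Fi k * tail Fi k \<le> C"
    and e: "\<epsilon> > 0"
  shows "limsup (\<lambda>N. ereal (tail_ratio Fi Fj (a + \<epsilon>) b N)) < 1"
proof -
  define T where "T = tail Fi"
  define U where "U = tail Fj"
  have Tp: "\<And>k. T k > 0" unfolding T_def using tail_pos[OF smi posi] by auto
  have Up: "\<And>k. U k > 0" unfolding U_def using tail_pos[OF smj posj] by auto
  have C: "C > 0"
  proof -
    have "0 < Fi 1 * T 1" using posi Tp by simp
    also have "\<dots> \<le> C" using Cb[rule_format, of 1] by (simp add: T_def)
    finally show ?thesis .
  qed
  have h: "Fi l * tail Fi l \<le> C * real l" if "l \<ge> 1" for l
  proof -
    have "(1 / real l) * Fi l * tail Fi l \<le> C" using Cb by blast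
    moreover have "real l > 0" using that by simp
    ultimately show ?thesis by (simp add: field_simps)
  qed
  define \<delta> where "\<delta> = \<epsilon> / (2 * (a + \<epsilon>))"
  have d0: "\<delta> > 0" using a e by (simp add: \<delta>_def)
  have d1: "\<delta> \<le> 1/2" using a e by (simp add: \<delta>_def field_simps)
  have dae: "\<delta> * (a + \<epsilon>) = \<epsilon> / 2" using a e by (simp add: \<delta>_def field_simps)
  define q where "q = 1 / (1 + \<delta> / C)"
  have q1: "q < 1"
  proof -
    have "0 < \<delta> / C" using d0 C by simp
    then show ?thesis by (simp add: q_def)
  qed
  obtain N0 :: nat where N0: "max (3 / (2 * a)) (3 / \<epsilon>) \<le> real N0" using real_arch_simple by blast
  have ev: "eventually (\<lambda>N. ereal (tail_ratio Fi Fj (a + \<epsilon>) b N) \<le> ereal (q * tail_ratio Fi Fj a b N)) sequentially"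
    using eventually_ge_at_top[of N0]
  proof eventually_elim
    case (elim N)
    define n where "n = lowidx a N"
    define m where "m = lowidx (a + \<epsilon>) N"
    have NA: "3 / (2 * a) \<le> real N" and NE: "3 / \<epsilon> \<le> real N" using N0 elim by auto
    have nb: "\<bar>real n - a * real N\<bar> \<le> 1/2" unfolding n_def by (rule lowidx_bound) (use a in simp)
    have mb: "\<bar>real m - (a + \<epsilon>) * real N\<bar> \<le> 1/2" unfolding m_def by (rule lowidx_bound) (use a e in simp)
    have "3 / 2 \<le> a * real N" using NA a by (simp add: field_simps)
    then have "1 \<le> real n" using nb unfolding abs_le_iff by linarith
    then have n1: "1 \<le> n" by simp
    have "3 \<le> \<epsilon> * real N" using NE e by (simp add: field_simps)
    have gap: "\<epsilon> * real N - 1 \<le> real m - real n" using nb mb unfolding abs_le_iff by (simp add: algebra_simps)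
    have nm: "n \<le> m" using gap \<open>3 \<le> \<epsilon> * real N\<close> by linarith
    have m0: "real m > 0" using n1 nm by simp
    have "\<delta> * real m \<le> \<delta> * ((a + \<epsilon>) * real N + 1/2)" 
    proof (rule mult_left_mono)
      show "real m \<le> (a + \<epsilon>) * real N + 1/2" using mb unfolding abs_le_iff by linarith
    qed (use d0 in simp)
    also have "\<dots> = (\<delta> * (a + \<epsilon>)) * real N + \<delta> / 2" by (simp add: algebra_simps)
    also have "\<dots> = \<epsilon> * real N / 2 + \<delta> / 2" unfolding dae by simp
    also have "\<dots> \<le> real m - real n" using gap d1 \<open>3 \<le> \<epsilon> * real N\<close> by linarith
    finally have dm: "\<delta> * real m \<le> real m - real n" .
    have KL: "(real m - real n) * T m / (C * real m) \<le> T n - T m"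
      unfolding T_def by (rule KI_lower[OF smi posi C h n1 nm])
    have "\<delta> * (T m / C) \<le> ((real m - real n) / real m) * (T m / C)"
    proof (rule mult_right_mono)
      show "\<delta> \<le> (real m - real n) / real m" using dm m0 by (simp add: field_simps)
      show "0 \<le> T m / C" using Tp[of m] C by simp
    qed
    also have "\<dots> = (real m - real n) * T m / (C * real m)" by simp
    finally have "\<delta> * (T m / C) \<le> T n - T m" using KL by linarith
    then have "T m * (1 + \<delta> / C) \<le> T n" by (simp add: algebra_simps)
    then have Tm: "T m \<le> q * T n" using d0 C by (simp add: q_def field_simps)
    have "tail_ratio Fi Fj (a + \<epsilon>) b N = T m / U (lowidx b N)"
      by (simp add: tail_ratio_def T_def U_def m_def)
    also have "\<dots> \<le> (q * T n) / U (lowidx b N)" using Tm Up[of "lowidx b N"] by (simp add: divide_right_mono)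
    also have "\<dots> = q * tail_ratio Fi Fj a b N" by (simp add: tail_ratio_def T_def U_def n_def)
    finally show ?case by simp
  qed
  have "limsup (\<lambda>N. ereal (tail_ratio Fi Fj (a + \<epsilon>) b N)) \<le> limsup (\<lambda>N. ereal (q * tail_ratio Fi Fj a b N))"
    by (rule Limsup_mono[OF ev])
  also have "limsup (\<lambda>N. ereal (q * tail_ratio Fi Fj a b N)) = ereal (q * 1)"
  proof (rule lim_imp_Limsup)
    have L: "(\<lambda>N. q * tail_ratio Fi Fj a b N) \<longlonglongrightarrow> q * 1" by (rule tendsto_mult[OF tendsto_const lim])
    show "(\<lambda>N. ereal (q * tail_ratio Fi Fj a b N)) \<longlonglongrightarrow> ereal (q * 1)" by (rule tendsto_ereal[OF L])
  qed simp
  also have "\<dots> < 1" using q1 by simp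
  finally show ?thesis .
qed

theorem mainTheorem7:
  fixes Fi Fj :: "nat \<Rightarrow> real"
  assumes posi: "\<And>k. Fi k > 0" and posj: "\<And>k. Fj k > 0"
    and sumi: "summable (\<lambda>k. 1 / Fi k)" and sumj: "summable (\<lambda>k. 1 / Fj k)"
  shows
    "(\<forall>a b. a > 0 \<and> b > 0 \<and> a + b \<le> 1 \<and>
        (tail_ratio Fi Fj a b \<longlonglongrightarrow> 1) \<and>
        (\<exists>C::real. \<forall>k::nat. (1 / real k) * Fi k * tail Fi k \<le> C)
        \<longrightarrow> (\<forall>\<epsilon>>0. limsup (\<lambda>N. ereal (tail_ratio Fi Fj (a + \<epsilon>) b N)) < 1))
     \<and>
     ((filterlim (\<lambda>k. (1 / real k) * Fi k * tail Fi k) at_top sequentially) \<and>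
      (\<exists>a b. a > 0 \<and> b > 0 \<and> a + b \<le> 1 \<and> (tail_ratio Fi Fj a b \<longlonglongrightarrow> 1))
      \<longrightarrow> (\<forall>a b. a > 0 \<and> b > 0 \<and> a + b \<le> 1 \<longrightarrow> (tail_ratio Fi Fj a b \<longlonglongrightarrow> 1)))"
proof (intro conjI allI impI)
  fix a b :: real
  assume h: "a > 0 \<and> b > 0 \<and> a + b \<le> 1 \<and> (tail_ratio Fi Fj a b \<longlonglongrightarrow> 1) \<and>
        (\<exists>C::real. \<forall>k::nat. (1 / real k) * Fi k * tail Fi k \<le> C)"
  then obtain C where C: "\<forall>k::nat. (1 / real k) * Fi k * tail Fi k \<le> C" by blast
  fix \<epsilon> :: real assume e: "\<epsilon> > 0"
  show "limsup (\<lambda>N. ereal (tail_ratio Fi Fj (a + \<epsilon>) b N)) < 1"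
    by (rule part1[OF sumi posi sumj posj _ _ C e]) (use h in auto)
next
  fix a b :: real
  assume h: "filterlim (\<lambda>k. (1 / real k) * Fi k * tail Fi k) at_top sequentially \<and>
      (\<exists>a b. a > 0 \<and> b > 0 \<and> a + b \<le> 1 \<and> (tail_ratio Fi Fj a b \<longlonglongrightarrow> 1))"
  assume ab: "a > 0 \<and> b > 0 \<and> a + b \<le> 1"
  from h obtain a0 b0 where "a0 > 0" "b0 > 0" and L0: "tail_ratio Fi Fj a0 b0 \<longlonglongrightarrow> 1" by blast
  show "tail_ratio Fi Fj a b \<longlonglongrightarrow> 1"
    by (rule part2[OF sumi posi sumj posj _ \<open>a0 > 0\<close> \<open>b0 > 0\<close> L0]) (use h ab in auto)
qed

end
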